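(* Let $t$ be a positive integer. For integers $m\ge 0$ and $n\ge 1$, let $g_t(m,n)$ denote the number of overpartitions of $n$ in which there are exactly $m$ overlined parts, the difference between the largest and the smallest part is at most $t$, and, if the difference between the largest and the smallest part is exactly $t$, then the largest part is not overlined. Then, as formal power series in $z$ and $q$, \[ \sum_{n\ge 1}\sum_{m\ge 0} g_t(m,n)z^mq^n=\frac{1}{1-q^t}\left(\frac{(-zq;q)_t}{(q;q)_t}-1\right). \]
   Context: An overpartition of a positive integer $n$ is a partition of $n$ (a weakly decreasing sequence of positive integers summing to $n$) in which the first occurrence of each distinct part size may be overlined. For comparisons of sizes, an overlined part $\overline{a}$ has value $a$. For a complex (or formal) $a$ and integer $n\ge 0$, $(a;q)_n=\prod_{k=0}^{n-1}(1-aq^k)$. *)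

theory Defs
  imports "HOL-Computational_Algebra.Formal_Power_Series"
begin

text \<open>An overpartition is encoded as a list of pairs (part, overlined), listed in
weakly decreasing order of parts; a part may be overlined only if it is the first
occurrence of its size.\<close>

definition is_overpartition :: "nat \<Rightarrow> (nat \<times> bool) list \<Rightarrow> bool" where
  "is_overpartition n xs \<longleftrightarrow>
     (\<forall>p\<in>set xs. fst p > 0) \<and>
     sorted_wrt (\<ge>) (map fst xs) \<and>
     sum_list (map fst xs) = n \<and>
     (\<forall>i<length xs. snd (xs ! i) \<longrightarrow> (i = 0 \<or> fst (xs ! (i - 1)) \<noteq> fst (xs ! i)))"

definition num_overlined :: "(nat \<times> bool) list \<Rightarrow> nat" where
  "num_overlined xs = length (filter snd xs)"

definition largest_part :: "(nat \<times> bool) list \<Rightarrow> nat" where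
  "largest_part xs = fst (hd xs)"

definition smallest_part :: "(nat \<times> bool) list \<Rightarrow> nat" where
  "smallest_part xs = fst (last xs)"

text \<open>The largest part is overlined iff some copy of it is overlined
(necessarily the first entry of the list).\<close>
definition largest_overlined :: "(nat \<times> bool) list \<Rightarrow> bool" where
  "largest_overlined xs \<longleftrightarrow> (\<exists>p\<in>set xs. fst p = largest_part xs \<and> snd p)"

definition g :: "nat \<Rightarrow> nat \<Rightarrow> nat \<Rightarrow> nat" where
  "g t m n = card {xs. is_overpartition n xs \<and> num_overlined xs = m \<and>
      smallest_part xs + t \<ge> largest_part xs \<and>
      (largest_part xs - smallest_part xs = t \<longrightarrow> \<not> largest_overlined xs)}"

text \<open>q-Pochhammer symbol (a;q)_n with q = fps_X.\<close>
definition qpoch :: "'a::comm_ring_1 fps \<Rightarrow> nat \<Rightarrow> 'a fps" where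
  "qpoch a n = (\<Prod>k<n. 1 - a * fps_X ^ k)"

end

theory Submission
  imports Defs
begin

fun ovp :: "(nat \<times> bool) list \<Rightarrow> bool" where
"ovp [] = True" |
"ovp [x] = (fst x > 0)" |
"ovp (x#y#r) = (fst y \<le> fst x \<and> (snd y \<longrightarrow> fst y \<noteq> fst x) \<and> ovp (y#r))"

definition ovok :: "(nat \<times> bool) list \<Rightarrow> bool" where
"ovok xs = (\<forall>i<length xs. snd (xs ! i) \<longrightarrow> (i = 0 \<or> fst (xs ! (i - 1)) \<noteq> fst (xs ! i)))"

lemma ovok_Nil: "ovok []" and ovok_single: "ovok [x]"
  by (auto simp: ovok_def)

lemma ovok_cons2: "ovok (x#y#r) = ((snd y \<longrightarrow> fst x \<noteq> fst y) \<and> ovok (y#r))"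
proof -
  have "ovok (x#y#r) = (\<forall>i<Suc (length (y#r)). snd ((x#y#r) ! i) \<longrightarrow> (i = 0 \<or> fst ((x#y#r) ! (i - 1)) \<noteq> fst ((x#y#r) ! i)))"
    by (simp add: ovok_def)
  also have "\<dots> = (\<forall>i<length (y#r). snd ((y#r) ! i) \<longrightarrow> fst ((x#y#r) ! i) \<noteq> fst ((y#r) ! i))"
    by (simp add: All_less_Suc2)
  also have "\<dots> = ((snd y \<longrightarrow> fst x \<noteq> fst y) \<and> (\<forall>i<length r. snd (r ! i) \<longrightarrow> fst ((y#r) ! i) \<noteq> fst (r ! i)))"
    by (simp add: All_less_Suc2)
  also have "\<dots> = ((snd y \<longrightarrow> fst x \<noteq> fst y) \<and> ovok (y#r))"
    by (simp add: ovok_def All_less_Suc2)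
  finally show ?thesis .
qed

lemma ovp_iff_aux: "((\<forall>p\<in>set xs. fst p > 0) \<and> sorted_wrt (\<ge>) (map fst xs) \<and> ovok xs) = ovp xs"
proof (induction xs rule: ovp.induct)
  case 1 then show ?case by (simp add: ovok_Nil)
next
  case (2 x) then show ?case by (simp add: ovok_single)
next
  case (3 x y r)
  have tr: "transp ((\<ge>) :: nat \<Rightarrow> nat \<Rightarrow> bool)" by (auto simp: transp_def)
  show ?case using 3 by (auto simp: sorted_wrt2[OF tr] ovok_cons2)
qed

lemma ovp_iff: "is_overpartition n xs = (ovp xs \<and> sum_list (map fst xs) = n)"
  using ovp_iff_aux[of xs] unfolding is_overpartition_def ovok_def by blast


lemma ovp_cons: "ovp (x#r) = (if r = [] then fst x > 0 else fst (hd r) \<le> fst x \<and> (snd (hd r) \<longrightarrow> fst (hd r) \<noteq> fst x) \<and> ovp r)"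
  by (cases r) auto

lemma ovp_tl: "ovp (x#r) \<Longrightarrow> ovp r"
  by (cases r) auto

lemma ovp_pos: "ovp xs \<Longrightarrow> p \<in> set xs \<Longrightarrow> fst p > 0"
  using ovp_iff_aux[of xs] by blast

lemma ovp_sorted: "ovp xs \<Longrightarrow> sorted_wrt (\<ge>) (map fst xs)"
  using ovp_iff_aux[of xs] by blast

lemma ovp_le_hd: "ovp (x#r) \<Longrightarrow> p \<in> set r \<Longrightarrow> fst p \<le> fst x"
  using ovp_sorted[of "x#r"] by auto

lemma ovp_le_hd': "ovp xs \<Longrightarrow> p \<in> set xs \<Longrightarrow> fst p \<le> fst (hd xs)"
  by (cases xs) (auto dest: ovp_le_hd)

lemma ovp_ge_last: "ovp xs \<Longrightarrow> p \<in> set xs \<Longrightarrow> fst (last xs) \<le> fst p"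
proof (induction xs arbitrary: p rule: ovp.induct)
  case (3 x y r)
  have a: "fst (last (y#r)) \<le> fst y" using 3(1)[of y] 3(2) by simp
  show ?case
  proof (cases "p = x")
    case True
    have "fst (last (x#y#r)) = fst (last (y#r))" by simp
    also have "\<dots> \<le> fst y" by (rule a)
    also have "\<dots> \<le> fst x" using 3(2) by simp
    finally show ?thesis using True by simp
  next
    case False then show ?thesis using 3 by simp
  qed
qed auto

lemma ovp_hd_only: "ovp (x#r) \<Longrightarrow> p \<in> set r \<Longrightarrow> fst p = fst x \<Longrightarrow> \<not> snd p"
proof (induction r arbitrary: x)
  case Nil then show ?case by simp
next
  case (Cons y r)
  show ?case
  proof (cases "p = y")
    case True then show ?thesis using Cons.prems by auto
  next
    case False
    then have pr: "p \<in> set r" using Cons.prems by auto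
    have "fst p \<le> fst y" using ovp_le_hd[of y r p] Cons.prems pr by auto
    moreover have "fst y \<le> fst x" using Cons.prems by auto
    ultimately have "fst p = fst y" using Cons.prems by auto
    then show ?thesis using Cons.IH[of y] Cons.prems pr by auto
  qed
qed

lemma ovp_snoc: "ovp (xs @ [y]) = (ovp xs \<and> fst y > 0 \<and> (xs \<noteq> [] \<longrightarrow> fst y \<le> fst (last xs) \<and> (snd y \<longrightarrow> fst y \<noteq> fst (last xs))))"
proof (induction xs rule: ovp.induct)
  case 1 then show ?case by simp
next
  case (2 x) then show ?case by auto
next
  case (3 x y' r)
  then show ?case by auto
qed

lemma ovp_butlast: "ovp xs \<Longrightarrow> ovp (butlast xs)"
  by (cases xs rule: rev_cases) (auto simp: ovp_snoc)

lemma ovp_length: "ovp xs \<Longrightarrow> length xs \<le> sum_list (map fst xs)"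
proof (induction xs)
  case (Cons x r) then show ?case using ovp_tl[of x r] ovp_pos[of "x#r" x] by auto
qed simp

lemma nov_le: "num_overlined xs \<le> length xs"
  by (simp add: num_overlined_def)

lemma ovp_part_le: "ovp xs \<Longrightarrow> p \<in> set xs \<Longrightarrow> fst p \<le> sum_list (map fst xs)"
  using member_le_sum_list[of "fst p" "map fst xs"] by auto

lemma finite_ovs: "finite {xs. ovp xs \<and> sum_list (map fst xs) = n}"
proof -
  have "{xs. ovp xs \<and> sum_list (map fst xs) = n} \<subseteq> {xs. set xs \<subseteq> {0..n} \<times> UNIV \<and> length xs \<le> n}"
    using ovp_length ovp_part_le by fastforce
  moreover have "finite {xs. set xs \<subseteq> ({0..n} \<times> (UNIV::bool set)) \<and> length xs \<le> n}"
    by (rule finite_lists_length_le) auto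
  ultimately show ?thesis by (rule finite_subset)
qed


definition Aset :: "nat \<Rightarrow> nat \<Rightarrow> (nat \<times> bool) list set" where
"Aset t n = {xs. is_overpartition n xs \<and> smallest_part xs + t \<ge> largest_part xs \<and>
      (largest_part xs - smallest_part xs = t \<longrightarrow> \<not> largest_overlined xs)}"

definition Bset :: "nat \<Rightarrow> nat \<Rightarrow> (nat \<times> bool) list set" where
"Bset t n = {xs. ovp xs \<and> sum_list (map fst xs) = n \<and> (\<forall>p\<in>set xs. fst p \<le> t)}"

lemma finite_Aset: "finite (Aset t n)"
  by (rule finite_subset[OF _ finite_ovs[of n]]) (auto simp: Aset_def ovp_iff)

lemma finite_Bset: "finite (Bset t n)"
  by (rule finite_subset[OF _ finite_ovs[of n]]) (auto simp: Bset_def)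

lemma nov_le_n: "xs \<in> Aset t n \<Longrightarrow> num_overlined xs \<le> n"
  using ovp_length[of xs] nov_le[of xs] by (auto simp: Aset_def ovp_iff)

lemma g_sum: "(\<Sum>m\<le>n. of_nat (g t m n) * (z::complex) ^ m) = (\<Sum>xs\<in>Aset t n. z ^ num_overlined xs)"
proof -
  have gc: "g t m n = card {xs \<in> Aset t n. num_overlined xs = m}" for m
    unfolding g_def Aset_def by (rule arg_cong[where f=card]) auto
  have "(\<Sum>xs\<in>Aset t n. z ^ num_overlined xs) = (\<Sum>m\<le>n. \<Sum>xs\<in>{xs \<in> Aset t n. num_overlined xs = m}. z ^ num_overlined xs)"
    by (rule sum.group[symmetric]) (auto simp: finite_Aset nov_le_n)
  also have "\<dots> = (\<Sum>m\<le>n. \<Sum>xs\<in>{xs \<in> Aset t n. num_overlined xs = m}. z ^ m)"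
    by (rule sum.cong) auto
  also have "\<dots> = (\<Sum>m\<le>n. of_nat (g t m n) * z ^ m)"
    by (simp add: gc)
  finally show ?thesis by simp
qed

lemma lo_cons: "ovp (x#r) \<Longrightarrow> largest_overlined (x#r) = snd x"
  using ovp_hd_only[of x r] by (auto simp: largest_overlined_def largest_part_def)

lemma Aset_alt: "xs \<in> Aset t n \<longleftrightarrow> ovp xs \<and> sum_list (map fst xs) = n \<and>
   fst (hd xs) \<le> fst (last xs) + t \<and> (xs \<noteq> [] \<longrightarrow> fst (hd xs) - fst (last xs) = t \<longrightarrow> \<not> snd (hd xs))"
proof (cases xs)
  case Nil then show ?thesis by (simp add: Aset_def ovp_iff largest_part_def smallest_part_def largest_overlined_def)
next
  case (Cons x r)
  then show ?thesis by (auto simp: Aset_def ovp_iff largest_part_def smallest_part_def lo_cons)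
qed


definition hmap :: "nat \<Rightarrow> (nat \<times> bool) list \<Rightarrow> (nat \<times> bool) list" where
"hmap t ys = (fst (last ys) + t, snd (last ys)) # butlast ys"

definition kmap :: "nat \<Rightarrow> (nat \<times> bool) list \<Rightarrow> (nat \<times> bool) list" where
"kmap t xs = tl xs @ [(fst (hd xs) - t, snd (hd xs))]"

lemma hmap_mem:
  assumes t: "t > 0" and m: "m \<ge> 1" and ys: "ys \<in> Aset t m"
  shows "hmap t ys \<in> Aset t (m + t) \<and> t < fst (hd (hmap t ys)) \<and> num_overlined (hmap t ys) = num_overlined ys"
proof -
  have A: "ovp ys" "sum_list (map fst ys) = m" "fst (hd ys) \<le> fst (last ys) + t"
     "ys \<noteq> [] \<Longrightarrow> fst (hd ys) - fst (last ys) = t \<Longrightarrow> \<not> snd (hd ys)"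
    using ys by (auto simp: Aset_alt)
  have ne: "ys \<noteq> []" using A(2) m by auto
  then obtain bs l where ys_eq: "ys = bs @ [l]" by (cases ys rule: rev_cases) auto
  have ob: "ovp bs" and lpos: "fst l > 0" and lb: "bs \<noteq> [] \<Longrightarrow> fst l \<le> fst (last bs) \<and> (snd l \<longrightarrow> fst l \<noteq> fst (last bs))"
    using A(1) unfolding ys_eq ovp_snoc by auto
  have h: "hmap t ys = (fst l + t, snd l) # bs" by (simp add: hmap_def ys_eq)
  have ovh: "ovp (hmap t ys)"
  proof (cases "bs = []")
    case True then show ?thesis using t by (simp add: h)
  next
    case False
    have hd: "hd ys = hd bs" "last ys = l" using False by (auto simp: ys_eq)
    have "fst (hd bs) \<le> fst l + t" using A(3) hd by simp
    moreover have "snd (hd bs) \<longrightarrow> fst (hd bs) \<noteq> fst l + t" using A(4)[OF ne] hd by auto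
    ultimately show ?thesis using False ob by (simp add: h ovp_cons)
  qed
  have sm: "sum_list (map fst (hmap t ys)) = m + t" unfolding h using A(2) by (simp add: ys_eq)
  have c1: "fst (hd (hmap t ys)) \<le> fst (last (hmap t ys)) + t"
    using lb by (cases "bs = []") (auto simp: h)
  have c2: "fst (hd (hmap t ys)) - fst (last (hmap t ys)) = t \<longrightarrow> \<not> snd (hd (hmap t ys))"
  proof (cases "bs = []")
    case True then show ?thesis using t by (simp add: h)
  next
    case False
    then show ?thesis using lb t by (auto simp: h)
  qed
  have "t < fst (hd (hmap t ys))" unfolding h using lpos by simp
  moreover have "num_overlined (hmap t ys) = num_overlined ys" unfolding h unfolding ys_eq num_overlined_def by simp
  moreover have "hmap t ys \<in> Aset t (m + t)" unfolding Aset_alt using ovh sm c1 c2 by blast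
  ultimately show ?thesis by blast
qed

lemma kmap_mem:
  assumes t: "t > 0" and n1: "n \<ge> 1" and xs: "xs \<in> Aset t n" and big: "t < fst (hd xs)"
  shows "kmap t xs \<in> Aset t (n - t) \<and> num_overlined (kmap t xs) = num_overlined xs"
proof -
  have A: "ovp xs" "sum_list (map fst xs) = n" "fst (hd xs) \<le> fst (last xs) + t"
     "xs \<noteq> [] \<Longrightarrow> fst (hd xs) - fst (last xs) = t \<Longrightarrow> \<not> snd (hd xs)"
    using xs by (auto simp: Aset_alt)
  have ne: "xs \<noteq> []" using A(2) n1 by (cases xs) auto
  then obtain x r where xs_eq: "xs = x # r" by (cases xs) auto
  have k: "kmap t xs = r @ [(fst x - t, snd x)]" by (simp add: kmap_def xs_eq)
  have or: "ovp r" using A(1) xs_eq ovp_tl by simp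
  have ovk: "ovp (kmap t xs)"
  proof (cases "r = []")
    case True then show ?thesis unfolding k using big by (simp add: xs_eq)
  next
    case False
    have "last xs = last r" using False by (simp add: xs_eq)
    have e: "fst x - t = fst (last r) \<Longrightarrow> fst x - fst (last r) = t" using big xs_eq by simp
    then show ?thesis unfolding k using A(3) A(4)[OF ne] False big or by (auto simp: xs_eq ovp_snoc)
  qed
  have sm: "sum_list (map fst (kmap t xs)) = n - t" unfolding k using A(2) big by (simp add: xs_eq)
  have c1: "fst (hd (kmap t xs)) \<le> fst (last (kmap t xs)) + t"
  proof (cases "r = []")
    case True then show ?thesis unfolding k by simp
  next
    case False then show ?thesis unfolding k using A(1) big t by (auto simp: xs_eq ovp_cons hd_append)
  qed
  have c2: "fst (hd (kmap t xs)) - fst (last (kmap t xs)) = t \<longrightarrow> \<not> snd (hd (kmap t xs))"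
  proof (cases "r = []")
    case True then show ?thesis unfolding k using t by simp
  next
    case False then show ?thesis unfolding k using A(1) big t by (auto simp: xs_eq ovp_cons hd_append)
  qed
  have "num_overlined (kmap t xs) = num_overlined xs" unfolding k unfolding xs_eq num_overlined_def by simp
  moreover have "kmap t xs \<in> Aset t (n - t)" unfolding Aset_alt using ovk sm c1 c2 by blast
  ultimately show ?thesis by blast
qed

lemma hk: "t < fst (hd xs) \<Longrightarrow> xs \<noteq> [] \<Longrightarrow> hmap t (kmap t xs) = xs"
  by (cases xs) (auto simp: hmap_def kmap_def)

lemma kh: "ys \<noteq> [] \<Longrightarrow> kmap t (hmap t ys) = ys"
  by (simp add: hmap_def kmap_def)


lemma Bset_sub: assumes "t > 0" "n \<ge> 1" shows "Bset t n \<subseteq> Aset t n"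
proof
  fix xs assume xs: "xs \<in> Bset t n"
  then have o: "ovp xs" and s: "sum_list (map fst xs) = n" and le: "\<forall>p\<in>set xs. fst p \<le> t"
    by (auto simp: Bset_def)
  have ne: "xs \<noteq> []" using s assms by auto
  have "fst (hd xs) \<le> t" using le ne by simp
  moreover have "fst (last xs) > 0" using ovp_pos[OF o, of "last xs"] ne by simp
  ultimately show "xs \<in> Aset t n" using o s assms by (auto simp: Aset_alt)
qed

lemma Aset_diff: assumes "n \<ge> 1"
  shows "Aset t n - Bset t n = {xs \<in> Aset t n. t < fst (hd xs)}"
proof -
  have "xs \<in> Bset t n \<longleftrightarrow> fst (hd xs) \<le> t" if xs: "xs \<in> Aset t n" for xs
  proof -
    have o: "ovp xs" and s: "sum_list (map fst xs) = n" using xs by (auto simp: Aset_alt)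
    have ne: "xs \<noteq> []" using s assms by auto
    show ?thesis using ovp_le_hd'[OF o] ne o s by (fastforce simp: Bset_def)
  qed
  then show ?thesis by auto
qed

lemma SA_rec:
  assumes t: "t > 0" and n: "n \<ge> 1"
  shows "(\<Sum>xs\<in>Aset t n. (z::complex) ^ num_overlined xs) = (\<Sum>xs\<in>Bset t n. z ^ num_overlined xs) +
          (if t < n then (\<Sum>xs\<in>Aset t (n - t). z ^ num_overlined xs) else 0)"
proof -
  let ?w = "\<lambda>xs. z ^ num_overlined xs"
  let ?D = "{xs \<in> Aset t n. t < fst (hd xs)}"
  have "sum ?w (Aset t n) = sum ?w (Aset t n - Bset t n) + sum ?w (Bset t n)"
    by (rule sum.subset_diff[OF Bset_sub[OF t n] finite_Aset])
  also have "Aset t n - Bset t n = ?D" by (rule Aset_diff[OF n])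
  also have "sum ?w ?D = (if t < n then sum ?w (Aset t (n - t)) else 0)"
  proof (cases "t < n")
    case True
    have bij: "bij_betw (hmap t) (Aset t (n - t)) ?D"
    proof (rule bij_betw_byWitness[where f'="kmap t"])
      show "\<forall>a\<in>Aset t (n - t). kmap t (hmap t a) = a"
      proof
        fix a assume "a \<in> Aset t (n - t)"
        then have "a \<noteq> []" using True by (auto simp: Aset_alt)
        then show "kmap t (hmap t a) = a" by (rule kh)
      qed
      show "\<forall>a'\<in>?D. hmap t (kmap t a') = a'"
      proof
        fix a assume a: "a \<in> ?D"
        then have "a \<noteq> []" using n by (auto simp: Aset_alt)
        then show "hmap t (kmap t a) = a" using a hk by auto
      qed
      show "hmap t ` Aset t (n - t) \<subseteq> ?D"
        using hmap_mem[OF t, of "n - t"] True by auto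
      show "kmap t ` ?D \<subseteq> Aset t (n - t)"
        using kmap_mem[OF t n] by auto
    qed
    have "sum ?w ?D = sum (?w \<circ> hmap t) (Aset t (n - t))"
      using sum.reindex_bij_betw[OF bij, of ?w] by simp
    also have "\<dots> = sum ?w (Aset t (n - t))"
      by (rule sum.cong) (use hmap_mem[OF t, of "n - t"] True in auto)
    finally show ?thesis using True by simp
  next
    case False
    have De: "?D = {}"
    proof (rule ccontr)
      assume "?D \<noteq> {}"
      then obtain xs where xs: "xs \<in> Aset t n" "t < fst (hd xs)" by auto
      have o: "ovp xs" and s: "sum_list (map fst xs) = n" using xs by (auto simp: Aset_alt)
      have ne: "xs \<noteq> []" using s n by auto
      have "fst (hd xs) \<le> n" using ovp_part_le[OF o, of "hd xs"] ne s by simp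
      then show False using xs False by simp
    qed
    have "sum ?w ?D = 0" by (simp only: De sum.empty)
    then show ?thesis using False by simp
  qed
  finally show ?thesis by simp
qed


definition phi :: "nat \<Rightarrow> (nat \<times> bool) list \<Rightarrow> (nat \<times> bool) list" where
"phi u ys = (if ys \<noteq> [] \<and> fst (hd ys) = u then (u, snd (hd ys)) # (u, False) # tl ys else (u, False) # ys)"

definition psi :: "nat \<Rightarrow> (nat \<times> bool) list \<Rightarrow> (nat \<times> bool) list" where
"psi u xs = (if tl xs \<noteq> [] \<and> fst (hd (tl xs)) = u then hd xs # tl (tl xs) else tl xs)"

definition Cset1 :: "nat \<Rightarrow> nat \<Rightarrow> (nat \<times> bool) list set" where
"Cset1 t n = {xs \<in> Bset (Suc t) n. xs \<noteq> [] \<and> fst (hd xs) = Suc t \<and> \<not> (snd (hd xs) \<and> (\<forall>p\<in>set (tl xs). fst p \<le> t))}"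

definition Cset2 :: "nat \<Rightarrow> nat \<Rightarrow> (nat \<times> bool) list set" where
"Cset2 t n = {xs \<in> Bset (Suc t) n. xs \<noteq> [] \<and> fst (hd xs) = Suc t \<and> (snd (hd xs) \<and> (\<forall>p\<in>set (tl xs). fst p \<le> t))}"

lemma phi_mem:
  assumes ys: "ys \<in> Bset (Suc t) m"
  shows "phi (Suc t) ys \<in> Cset1 t (m + Suc t) \<and> psi (Suc t) (phi (Suc t) ys) = ys \<and>
         num_overlined (phi (Suc t) ys) = num_overlined ys"
proof -
  let ?u = "Suc t"
  have o: "ovp ys" and s: "sum_list (map fst ys) = m" and le: "\<forall>p\<in>set ys. fst p \<le> ?u"
    using ys by (auto simp: Bset_def)
  show ?thesis
  proof (cases "ys \<noteq> [] \<and> fst (hd ys) = ?u")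
    case True
    then obtain y r where yr: "ys = y # r" "fst y = ?u" by (cases ys) auto
    have p: "phi ?u ys = (?u, snd y) # (?u, False) # r" by (simp add: phi_def yr)
    have o2: "ovp ((?u, False) # r)"
    proof (cases "r = []")
      case True then show ?thesis by simp
    next
      case False
      have "fst (hd r) \<le> fst y" using ovp_le_hd[of y r "hd r"] o yr False by simp
      moreover have "snd (hd r) \<longrightarrow> fst (hd r) \<noteq> fst y" "ovp r" using o yr False by (auto simp: ovp_cons)
      ultimately show ?thesis using False yr by (simp add: ovp_cons)
    qed
    have "phi ?u ys \<in> Cset1 t (m + ?u)"
      unfolding p Cset1_def Bset_def using o2 s le yr by auto
    moreover have "psi ?u (phi ?u ys) = ys" unfolding p by (simp add: psi_def yr prod_eq_iff)
    moreover have "num_overlined (phi ?u ys) = num_overlined ys" unfolding p by (simp add: yr num_overlined_def)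
    ultimately show ?thesis by blast
  next
    case False
    have p: "phi ?u ys = (?u, False) # ys" using False by (auto simp: phi_def)
    have o2: "ovp ((?u, False) # ys)"
    proof (cases "ys = []")
      case True then show ?thesis by simp
    next
      case ne: False
      then show ?thesis using False o le by (simp add: ovp_cons)
    qed
    have "phi ?u ys \<in> Cset1 t (m + ?u)"
      unfolding p Cset1_def Bset_def using o2 s le by auto
    moreover have "psi ?u (phi ?u ys) = ys" unfolding p using False by (auto simp: psi_def)
    moreover have "num_overlined (phi ?u ys) = num_overlined ys" unfolding p by (simp add: num_overlined_def)
    ultimately show ?thesis by blast
  qed
qed

lemma psi_mem:
  assumes xs: "xs \<in> Cset1 t n"
  shows "psi (Suc t) xs \<in> Bset (Suc t) (n - Suc t) \<and> phi (Suc t) (psi (Suc t) xs) = xs"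
proof -
  let ?u = "Suc t"
  obtain x r where xr: "xs = x # r" using xs by (cases xs) (auto simp: Cset1_def)
  have o: "ovp (x#r)" and s: "sum_list (map fst (x#r)) = n" and le: "\<forall>p\<in>set (x#r). fst p \<le> ?u"
    and fx: "fst x = ?u" and nc: "\<not> (snd x \<and> (\<forall>p\<in>set r. fst p \<le> t))"
    using xs xr by (auto simp: Cset1_def Bset_def)
  show ?thesis
  proof (cases "r \<noteq> [] \<and> fst (hd r) = ?u")
    case True
    then obtain y r' where yr: "r = y # r'" "fst y = ?u" by (cases r) auto
    have p: "psi ?u xs = x # r'" by (simp add: psi_def xr yr)
    have sy: "\<not> snd y" using o yr fx by auto
    have o2: "ovp (x # r')"
    proof (cases "r' = []")
      case True then show ?thesis using fx by simp
    next
      case False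
      have "fst (hd r') \<le> fst y" using ovp_le_hd[of y r' "hd r'"] o yr False by (simp add: ovp_tl)
      moreover have "snd (hd r') \<longrightarrow> fst (hd r') \<noteq> fst y" "ovp r'" using o yr False by (auto simp: ovp_cons)
      ultimately show ?thesis using False yr fx by (simp add: ovp_cons)
    qed
    have "psi ?u xs \<in> Bset ?u (n - ?u)" unfolding p Bset_def using o2 s le yr by auto
    moreover have "phi ?u (psi ?u xs) = xs" unfolding p using fx sy by (simp add: phi_def xr yr prod_eq_iff)
    ultimately show ?thesis by blast
  next
    case False
    have p: "psi ?u xs = r" using False by (auto simp: psi_def xr)
    have rt: "\<forall>p\<in>set r. fst p \<le> t"
    proof
      fix p assume pr: "p \<in> set r"
      then have ne: "r \<noteq> []" by auto
      have "fst p \<le> fst (hd r)" using ovp_le_hd'[OF ovp_tl[OF o] pr] .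
      moreover have "fst (hd r) \<le> ?u" using le ne by simp
      moreover have "fst (hd r) \<noteq> ?u" using False ne by simp
      ultimately show "fst p \<le> t" by simp
    qed
    have sx: "\<not> snd x" using nc rt by simp
    have "psi ?u xs \<in> Bset ?u (n - ?u)" unfolding p Bset_def using ovp_tl[OF o] s le fx by auto
    moreover have "phi ?u (psi ?u xs) = xs" unfolding p using False fx sx by (auto simp: phi_def xr prod_eq_iff)
    ultimately show ?thesis by blast
  qed
qed

lemma C2_mem1: assumes "ys \<in> Bset t m" shows "(Suc t, True) # ys \<in> Cset2 t (m + Suc t)"
proof -
  have o: "ovp ys" and s: "sum_list (map fst ys) = m" and le: "\<forall>p\<in>set ys. fst p \<le> t"
    using assms by (auto simp: Bset_def)
  have "ovp ((Suc t, True) # ys)"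
  proof (cases "ys = []")
    case True then show ?thesis by simp
  next
    case False
    have "fst (hd ys) \<le> t" using le hd_in_set[OF False] by blast
    then show ?thesis using o False by (auto simp: ovp_cons)
  qed
  then show ?thesis using s le by (auto simp: Cset2_def Bset_def)
qed

lemma C2_mem2: assumes "xs \<in> Cset2 t n" shows "tl xs \<in> Bset t (n - Suc t) \<and> (Suc t, True) # tl xs = xs"
proof -
  obtain x r where xr: "xs = x # r" using assms by (cases xs) (auto simp: Cset2_def)
  show ?thesis using assms ovp_tl[of x r] by (auto simp: Cset2_def Bset_def xr prod_eq_iff)
qed


lemma SB_rec:
  "(\<Sum>xs\<in>Bset (Suc t) n. (z::complex) ^ num_overlined xs) = (\<Sum>xs\<in>Bset t n. z ^ num_overlined xs) +
     (if Suc t \<le> n then (\<Sum>xs\<in>Bset (Suc t) (n - Suc t). z ^ num_overlined xs) +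
        z * (\<Sum>xs\<in>Bset t (n - Suc t). z ^ num_overlined xs) else 0)"
proof -
  let ?w = "\<lambda>xs. z ^ num_overlined xs"
  have split: "Bset (Suc t) n = Bset t n \<union> (Cset1 t n \<union> Cset2 t n)"
  proof (rule set_eqI, rule iffI)
    fix xs assume xs: "xs \<in> Bset (Suc t) n"
    show "xs \<in> Bset t n \<union> (Cset1 t n \<union> Cset2 t n)"
    proof (cases "xs \<noteq> [] \<and> fst (hd xs) = Suc t")
      case True then show ?thesis using xs by (auto simp: Cset1_def Cset2_def)
    next
      case False
      have "\<forall>p\<in>set xs. fst p \<le> t"
      proof
        fix p assume pr: "p \<in> set xs"
        then have ne: "xs \<noteq> []" by auto
        have o: "ovp xs" using xs by (simp add: Bset_def)
        have "fst p \<le> fst (hd xs)" using ovp_le_hd'[OF o pr] .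
        moreover have "fst (hd xs) \<le> Suc t" using xs ne by (simp add: Bset_def)
        moreover have "fst (hd xs) \<noteq> Suc t" using False ne by simp
        ultimately show "fst p \<le> t" by simp
      qed
      then show ?thesis using xs by (auto simp: Bset_def)
    qed
  next
    fix xs assume "xs \<in> Bset t n \<union> (Cset1 t n \<union> Cset2 t n)"
    then show "xs \<in> Bset (Suc t) n" by (auto simp: Bset_def Cset1_def Cset2_def)
  qed
  have hb: "fst (hd xs) \<le> t" if "xs \<in> Bset t n" "xs \<noteq> []" for xs
    using that hd_in_set[of xs] by (auto simp: Bset_def)
  have d1: "Bset t n \<inter> (Cset1 t n \<union> Cset2 t n) = {}"
    using hb by (force simp: Cset1_def Cset2_def)
  have d2: "Cset1 t n \<inter> Cset2 t n = {}"
    by (auto simp: Cset1_def Cset2_def)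
  have f1: "finite (Cset1 t n)" "finite (Cset2 t n)"
    by (rule finite_subset[OF _ finite_Bset[of "Suc t" n]]; auto simp: Cset1_def Cset2_def)+
  have "sum ?w (Bset (Suc t) n) = sum ?w (Bset t n) + (sum ?w (Cset1 t n) + sum ?w (Cset2 t n))"
    unfolding split
    by (simp add: sum.union_disjoint d1 d2 f1 finite_Bset)
  also have "sum ?w (Cset1 t n) + sum ?w (Cset2 t n) =
     (if Suc t \<le> n then sum ?w (Bset (Suc t) (n - Suc t)) + z * sum ?w (Bset t (n - Suc t)) else 0)"
  proof (cases "Suc t \<le> n")
    case True
    define m where "m = n - Suc t"
    have nm: "n = m + Suc t" using True by (simp add: m_def)
    have bij1: "bij_betw (phi (Suc t)) (Bset (Suc t) m) (Cset1 t n)"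
    proof (rule bij_betw_byWitness[where f'="psi (Suc t)"])
      show "\<forall>a\<in>Bset (Suc t) m. psi (Suc t) (phi (Suc t) a) = a" using phi_mem by blast
      show "\<forall>a'\<in>Cset1 t n. phi (Suc t) (psi (Suc t) a') = a'" using psi_mem by blast
      show "phi (Suc t) ` Bset (Suc t) m \<subseteq> Cset1 t n" using phi_mem nm by blast
      show "psi (Suc t) ` Cset1 t n \<subseteq> Bset (Suc t) m" using psi_mem m_def by blast
    qed
    have bij2: "bij_betw (Cons (Suc t, True)) (Bset t m) (Cset2 t n)"
    proof (rule bij_betw_byWitness[where f'="tl"])
      show "\<forall>a\<in>Bset t m. tl ((Suc t, True) # a) = a" by simp
      show "\<forall>a'\<in>Cset2 t n. (Suc t, True) # tl a' = a'" using C2_mem2 by blast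
      show "Cons (Suc t, True) ` Bset t m \<subseteq> Cset2 t n" using C2_mem1 nm by blast
      show "tl ` Cset2 t n \<subseteq> Bset t m" using C2_mem2 m_def by blast
    qed
    have "sum ?w (Cset1 t n) = sum (?w \<circ> phi (Suc t)) (Bset (Suc t) m)"
      using sum.reindex_bij_betw[OF bij1, of ?w] by simp
    also have "\<dots> = sum ?w (Bset (Suc t) m)"
      by (rule sum.cong) (use phi_mem in auto)
    finally have e1: "sum ?w (Cset1 t n) = sum ?w (Bset (Suc t) m)" .
    have "sum ?w (Cset2 t n) = sum (?w \<circ> Cons (Suc t, True)) (Bset t m)"
      using sum.reindex_bij_betw[OF bij2, of ?w] by simp
    also have "\<dots> = (\<Sum>xs\<in>Bset t m. z * ?w xs)"
      by (rule sum.cong) (auto simp: num_overlined_def)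
    also have "\<dots> = z * sum ?w (Bset t m)" by (simp add: sum_distrib_left)
    finally have e2: "sum ?w (Cset2 t n) = z * sum ?w (Bset t m)" .
    show ?thesis using e1 e2 True m_def by simp
  next
    case False
    have "Cset1 t n = {}" "Cset2 t n = {}"
    proof -
      have "\<not> (xs \<in> Bset (Suc t) n \<and> xs \<noteq> [] \<and> fst (hd xs) = Suc t)" for xs
      proof
        assume a: "xs \<in> Bset (Suc t) n \<and> xs \<noteq> [] \<and> fst (hd xs) = Suc t"
        then have "fst (hd xs) \<le> n" using ovp_part_le[of xs "hd xs"] by (auto simp: Bset_def)
        then show False using a False by simp
      qed
      then show "Cset1 t n = {}" "Cset2 t n = {}" by (auto simp: Cset1_def Cset2_def)
    qed
    then show ?thesis using False by simp
  qed
  finally show ?thesis .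
qed


definition PP :: "complex \<Rightarrow> nat \<Rightarrow> complex fps" where
"PP z t = Abs_fps (\<lambda>n. \<Sum>xs\<in>Bset t n. z ^ num_overlined xs)"

lemma Bset_0: "Bset t 0 = {[]}"
proof -
  have "xs = []" if "ovp xs" "sum_list (map fst xs) = 0" for xs
    using ovp_length[OF that(1)] that(2) by simp
  then show ?thesis by (auto simp: Bset_def)
qed

lemma Bset_zero: "n \<ge> 1 \<Longrightarrow> Bset 0 n = {}"
proof -
  assume n: "n \<ge> 1"
  have False if "xs \<in> Bset 0 n" for xs
  proof -
    have "xs \<noteq> []" using that n by (auto simp: Bset_def)
    then have "hd xs \<in> set xs" by simp
    then show False using that ovp_pos[of xs "hd xs"] by (auto simp: Bset_def)
  qed
  then show ?thesis by blast
qed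

lemma PP_0: "PP z 0 = 1"
proof (rule fps_ext)
  fix n show "fps_nth (PP z 0) n = fps_nth 1 n"
    by (cases "n = 0") (auto simp: PP_def Bset_0 Bset_zero num_overlined_def)
qed

lemma PP_rec: "PP z (Suc t) * (1 - fps_X ^ Suc t) = PP z t * (1 + fps_const z * fps_X ^ Suc t)"
proof -
  have l: "PP z (Suc t) * (1 - fps_X ^ Suc t) = PP z (Suc t) - PP z (Suc t) * fps_X ^ Suc t"
    by (simp add: algebra_simps)
  have r: "PP z t * (1 + fps_const z * fps_X ^ Suc t) = PP z t + fps_const z * (PP z t * fps_X ^ Suc t)"
    by (simp add: algebra_simps)
  show ?thesis unfolding l r
  proof (rule fps_ext)
    fix n
    show "fps_nth (PP z (Suc t) - PP z (Suc t) * fps_X ^ Suc t) n = fps_nth (PP z t + fps_const z * (PP z t * fps_X ^ Suc t)) n"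
      unfolding fps_sub_nth fps_add_nth fps_mult_left_const_nth fps_X_power_mult_right_nth PP_def fps_nth_Abs_fps
      using SB_rec[where z=z and t=t and n=n] by (auto simp: not_less)
  qed
qed

lemma qpoch_Suc: "qpoch a (Suc t) = qpoch a t * (1 - a * fps_X ^ t)"
  by (simp add: qpoch_def)

lemma PP_qpoch: "PP z t * qpoch fps_X t = qpoch (- fps_const z * fps_X) t"
proof (induction t)
  case 0 then show ?case by (simp add: PP_0 qpoch_def)
next
  case (Suc t)
  have "PP z (Suc t) * qpoch fps_X (Suc t) = (PP z (Suc t) * (1 - fps_X ^ Suc t)) * qpoch fps_X t"
    by (simp add: qpoch_Suc algebra_simps)
  also have "\<dots> = (PP z t * (1 + fps_const z * fps_X ^ Suc t)) * qpoch fps_X t"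
    by (simp only: PP_rec)
  also have "\<dots> = (PP z t * qpoch fps_X t) * (1 + fps_const z * fps_X ^ Suc t)"
    by (simp only: mult_ac)
  also have "\<dots> = qpoch (- fps_const z * fps_X) t * (1 + fps_const z * fps_X ^ Suc t)"
    by (simp only: Suc.IH)
  also have "(1 + fps_const z * fps_X ^ Suc t) = 1 - (- fps_const z * fps_X) * fps_X ^ t"
    by (simp add: algebra_simps del: fps_const_neg)
  also have "qpoch (- fps_const z * fps_X) t * \<dots> = qpoch (- fps_const z * fps_X) (Suc t)"
    by (simp only: qpoch_Suc)
  finally show ?case .
qed

lemma qpoch_X_0: "fps_nth (qpoch fps_X t) 0 = (1::complex)"
  by (induction t) (simp_all add: qpoch_Suc qpoch_def)


theorem theorem1p1:
  fixes t :: nat and z :: complex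
  assumes "t > 0"
  shows "Abs_fps (\<lambda>n. if n \<ge> 1 then (\<Sum>m\<le>n. of_nat (g t m n) * z ^ m) else 0)
       = (1 / (1 - fps_X ^ t)) *
         (qpoch (- fps_const z * fps_X) t / qpoch fps_X t - 1)"
proof -
  define G where "G = Abs_fps (\<lambda>n. if n \<ge> 1 then (\<Sum>m\<le>n. of_nat (g t m n) * z ^ m) else 0)"
  have Gn: "fps_nth G n = (if n \<ge> 1 then (\<Sum>xs\<in>Aset t n. z ^ num_overlined xs) else 0)" for n
    by (simp add: G_def g_sum)
  have key: "G * (1 - fps_X ^ t) = PP z t - 1"
  proof -
    have l: "G * (1 - fps_X ^ t) = G - G * fps_X ^ t" by (simp add: algebra_simps)
    show ?thesis unfolding l
    proof (rule fps_ext)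
      fix n
      show "fps_nth (G - G * fps_X ^ t) n = fps_nth (PP z t - 1) n"
      proof (cases "n = 0")
        case True
        then show ?thesis using assms
          unfolding fps_sub_nth fps_X_power_mult_right_nth Gn PP_def fps_nth_Abs_fps
          by (simp add: Bset_0 num_overlined_def)
      next
        case False
        then have n1: "n \<ge> 1" by simp
        show ?thesis
          unfolding fps_sub_nth fps_X_power_mult_right_nth Gn PP_def fps_nth_Abs_fps
          using SA_rec[OF assms n1, of z] n1 False by auto
      qed
    qed
  qed
  have q0: "fps_nth (qpoch fps_X t) 0 \<noteq> (0::complex)" by (simp add: qpoch_X_0)
  have div: "qpoch (- fps_const z * fps_X) t / qpoch fps_X t = PP z t"
  proof -
    have "qpoch (- fps_const z * fps_X) t / qpoch fps_X t = PP z t * qpoch fps_X t * inverse (qpoch fps_X t)"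
      by (simp add: fps_divide_unit[OF q0] PP_qpoch)
    also have "\<dots> = PP z t" using inverse_mult_eq_1'[OF q0] by (simp add: mult.assoc)
    finally show ?thesis .
  qed
  have d0: "fps_nth (1 - fps_X ^ t) 0 \<noteq> (0::complex)" using assms by simp
  have "(1 / (1 - fps_X ^ t)) * (qpoch (- fps_const z * fps_X) t / qpoch fps_X t - 1)
      = inverse (1 - fps_X ^ t) * (G * (1 - fps_X ^ t))"
  proof -
    have a: "qpoch (- fps_const z * fps_X) t / qpoch fps_X t - 1 = G * (1 - fps_X ^ t)"
      by (simp only: div key)
    have b: "1 / (1 - fps_X ^ t) = inverse (1 - fps_X ^ t :: complex fps)"
      by (simp only: fps_divide_unit[OF d0] mult_1_left)
    show ?thesis by (simp only: a b)
  qed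
  also have "\<dots> = G" using inverse_mult_eq_1[OF d0] by (simp add: mult.commute mult.left_commute)
  finally show ?thesis by (simp add: G_def)
qed

end
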